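(* Let $n\ge 3$ and define $$m=\begin{cases} n-2, & n\equiv 1,3\pmod 6,\ n\ne 7;\\ n-1, & n=7 \text{ or } n\equiv 0,2,5\pmod 6,\ n\ne 6;\\ n, & n=6 \text{ or } n\equiv 4\pmod 6.\end{cases}$$ If $g\ge m$ is a positive integer and there exists an orthogonal array $\mathrm{OA}(3,n+2,g)$, then there exists a $\mathrm{TOC}_{g+1}(n,4,3)$.
   Context: $\mathcal{H}_q(n,w)$ is the set of all words of length $n$ over $\mathbb{Z}_q$ with exactly $w$ nonzero entries, with the Hamming distance. An $(n,d,w)_q$-code is a nonempty subset of $\mathcal{H}_q(n,w)$ in which any two distinct words have Hamming distance at least $d$; $A_q(n,d,w)$ is the maximum size of such a code and a code of this size is optimal. A $\mathrm{TOC}_q(n,d,w)$ is a partition of $\mathcal{H}_q(n,w)$ into mutually disjoint optimal $(n,d,w)_q$-codes. An orthogonal array $\mathrm{OA}(t,k,s)$ is an $s^t\times k$ array over an $s$-symbol alphabet such that in every choice of $t$ columns each ordered $t$-tuple of symbols appears in exactly one row. *)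

theory Defs
  imports Main
begin

definition hamming_dist :: "nat list \<Rightarrow> nat list \<Rightarrow> nat" where
  "hamming_dist x y = card {i. i < length x \<and> x ! i \<noteq> y ! i}"

definition weight :: "nat list \<Rightarrow> nat" where
  "weight x = card {i. i < length x \<and> x ! i \<noteq> 0}"

definition Hq :: "nat \<Rightarrow> nat \<Rightarrow> nat \<Rightarrow> nat list set" where
  "Hq q n w = {x. length x = n \<and> set x \<subseteq> {..<q} \<and> weight x = w}"

definition is_code :: "nat \<Rightarrow> nat \<Rightarrow> nat \<Rightarrow> nat \<Rightarrow> nat list set \<Rightarrow> bool" where
  "is_code q n d w C \<longleftrightarrow> C \<noteq> {} \<and> C \<subseteq> Hq q n w \<and>
     (\<forall>x\<in>C. \<forall>y\<in>C. x \<noteq> y \<longrightarrow> hamming_dist x y \<ge> d)"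

definition Aq :: "nat \<Rightarrow> nat \<Rightarrow> nat \<Rightarrow> nat \<Rightarrow> nat" where
  "Aq q n d w = Max (card ` {C. is_code q n d w C})"

definition optimal_code :: "nat \<Rightarrow> nat \<Rightarrow> nat \<Rightarrow> nat \<Rightarrow> nat list set \<Rightarrow> bool" where
  "optimal_code q n d w C \<longleftrightarrow> is_code q n d w C \<and> card C = Aq q n d w"

definition TOC :: "nat \<Rightarrow> nat \<Rightarrow> nat \<Rightarrow> nat \<Rightarrow> nat list set set \<Rightarrow> bool" where
  "TOC q n d w P \<longleftrightarrow> \<Union>P = Hq q n w \<and>
     (\<forall>C\<in>P. optimal_code q n d w C) \<and>
     (\<forall>C\<in>P. \<forall>D\<in>P. C \<noteq> D \<longrightarrow> C \<inter> D = {})"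

definition OA :: "nat \<Rightarrow> nat \<Rightarrow> nat \<Rightarrow> bool" where
  "OA t k s \<longleftrightarrow> (\<exists>A :: nat \<Rightarrow> nat \<Rightarrow> nat.
     (\<forall>r < s ^ t. \<forall>c < k. A r c < s) \<and>
     (\<forall>cs vs. distinct cs \<and> length cs = t \<and> set cs \<subseteq> {..<k} \<and>
              length vs = t \<and> set vs \<subseteq> {..<s} \<longrightarrow>
        (\<exists>!r. r < s ^ t \<and> (\<forall>j < t. A r (cs ! j) = vs ! j))))"

definition m_param :: "nat \<Rightarrow> nat" where
  "m_param n =
     (if (n mod 6 = 1 \<or> n mod 6 = 3) \<and> n \<noteq> 7 then n - 2
      else if n = 7 \<or> ((n mod 6 = 0 \<or> n mod 6 = 2 \<or> n mod 6 = 5) \<and> n \<noteq> 6) then n - 1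
      else n)"

end

theory Submission imports Defs "HOL-Number_Theory.Cong" begin

definition oap :: "(nat \<Rightarrow> nat \<Rightarrow> nat) \<Rightarrow> nat \<Rightarrow> nat \<Rightarrow> bool" where
  "oap A k s \<longleftrightarrow> (\<forall>cs vs. distinct cs \<and> length cs = 3 \<and> set cs \<subseteq> {..<k} \<and>
              length vs = 3 \<and> set vs \<subseteq> {..<s} \<longrightarrow>
        (\<exists>!r. r < s ^ 3 \<and> (\<forall>j < 3. A r (cs ! j) = vs ! j)))"

lemma all3: "(\<forall>j<3. P j) \<longleftrightarrow> P 0 \<and> P 1 \<and> P (2::nat)"
proof
  assume "\<forall>j<3. P j" thus "P 0 \<and> P 1 \<and> P 2" by simp
next
  assume H: "P 0 \<and> P 1 \<and> P 2"
  show "\<forall>j<3. P j"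
  proof (intro allI impI)
    fix j :: nat assume "j < 3"
    then have "j = 0 \<or> j = 1 \<or> j = 2" by arith
    then show "P j" using H by blast
  qed
qed

lemma oa_ex:
  assumes "oap A k s" "a < k" "b < k" "c < k" "a \<noteq> b" "a \<noteq> c" "b \<noteq> c"
    "u < s" "v < s" "w < s"
  shows "\<exists>r<s^3. A r a = u \<and> A r b = v \<and> A r c = w"
proof -
  have pre: "distinct [a,b,c] \<and> length [a,b,c] = 3 \<and> set [a,b,c] \<subseteq> {..<k} \<and>
              length [u,v,w] = 3 \<and> set [u,v,w] \<subseteq> {..<s}" using assms by simp
  have "\<exists>!r. r < s ^ 3 \<and> (\<forall>j < 3. A r ([a,b,c] ! j) = [u,v,w] ! j)"
    using assms(1) pre unfolding oap_def by blast
  then obtain r where "r < s ^ 3" "\<forall>j < 3. A r ([a,b,c] ! j) = [u,v,w] ! j" by blast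
  then show ?thesis unfolding all3 by auto
qed

lemma oa_uniq:
  assumes "oap A k s" "a < k" "b < k" "c < k" "a \<noteq> b" "a \<noteq> c" "b \<noteq> c"
    "\<forall>r<s^3. \<forall>c<k. A r c < s" "r < s^3" "r' < s^3"
    "A r a = A r' a" "A r b = A r' b" "A r c = A r' c"
  shows "r = r'"
proof -
  have "A r a < s" "A r b < s" "A r c < s" using assms by auto
  then have pre: "distinct [a,b,c] \<and> length [a,b,c] = 3 \<and> set [a,b,c] \<subseteq> {..<k} \<and>
              length [A r a, A r b, A r c] = 3 \<and> set [A r a, A r b, A r c] \<subseteq> {..<s}" using assms by simp
  have "\<exists>!r0. r0 < s ^ 3 \<and> (\<forall>j < 3. A r0 ([a,b,c] ! j) = [A r a, A r b, A r c] ! j)"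
    using assms(1) pre unfolding oap_def by blast
  moreover have "r < s ^ 3 \<and> (\<forall>j < 3. A r ([a,b,c] ! j) = [A r a, A r b, A r c] ! j)"
    unfolding all3 using assms by simp
  moreover have "r' < s ^ 3 \<and> (\<forall>j < 3. A r' ([a,b,c] ! j) = [A r a, A r b, A r c] ! j)"
    unfolding all3 using assms by simp
  ultimately show ?thesis by blast
qed

lemma bush:
  assumes rng: "\<forall>r<g^3. \<forall>c<n+2. A r c < g"
  and oa: "oap A (n+2) g" and g2: "g \<ge> 2" and n1: "n \<ge> 1"
  shows "n \<le> g"
proof -
  define a0 where "a0 = A 0 0"
  have g3: "0 < g^3" using g2 by simp
  define R where "R = {r. r < g^3 \<and> A r 0 = a0}"
  have finR: "finite R" unfolding R_def by simp
  have "inj_on (\<lambda>r. (A r 1, A r 2)) R"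
  proof (rule inj_onI)
    fix x y assume "x \<in> R" "y \<in> R" "(A x 1, A x 2) = (A y 1, A y 2)"
    then show "x = y" using oa_uniq[OF oa, of 0 1 2] rng n1 unfolding R_def by auto
  qed
  moreover have "(\<lambda>r. (A r 1, A r 2)) ` R \<subseteq> {..<g} \<times> {..<g}"
    using rng n1 unfolding R_def by auto
  ultimately have cR: "card R \<le> g * g"
    using card_inj_on_le[of _ R "{..<g} \<times> {..<g}"] by (simp add: card_cartesian_product)
  have "0 \<in> R" unfolding R_def a0_def using g3 by simp
  hence cR0: "card (R - {0}) \<le> g * g - 1" using cR finR by simp
  define S where "S c = {r. r < g^3 \<and> A r 0 = a0 \<and> A r c = A 0 c} - {0}" for c
  have cS: "card (S c) \<ge> g - 1" if c: "c \<in> {1..n+1}" for c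
  proof -
    define d where "d = (if c = 1 then 2 else 1::nat)"
    have d: "d < n + 2" "d \<noteq> 0" "d \<noteq> c" using c n1 unfolding d_def by auto
    let ?S = "{r. r < g^3 \<and> A r 0 = a0 \<and> A r c = A 0 c}"
    have "{..<g} \<subseteq> (\<lambda>r. A r d) ` ?S"
    proof
      fix u assume u: "u \<in> {..<g}"
      have "a0 < g" "A 0 c < g" using rng g3 c unfolding a0_def by auto
      then obtain r where "r<g^3" "A r 0 = a0" "A r c = A 0 c" "A r d = u"
        using oa_ex[OF oa, of 0 c d a0 "A 0 c" u] c d u by auto
      then show "u \<in> (\<lambda>r. A r d) ` ?S" by auto
    qed
    hence "card {..<g} \<le> card ((\<lambda>r. A r d) ` ?S)"
      by (intro card_mono) auto
    also have "\<dots> \<le> card ?S" by (rule card_image_le) simp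
    finally have "g \<le> card ?S" by simp
    moreover have "0 \<in> ?S" using g3 unfolding a0_def by simp
    ultimately show ?thesis unfolding S_def by simp
  qed
  have disj: "\<forall>c\<in>{1..n+1}. \<forall>c'\<in>{1..n+1}. c \<noteq> c' \<longrightarrow> S c \<inter> S c' = {}"
  proof (intro ballI impI)
    fix c c' assume c: "c \<in> {1..n+1}" "c' \<in> {1..n+1}" "c \<noteq> c'"
    show "S c \<inter> S c' = {}"
    proof (rule ccontr)
      assume "S c \<inter> S c' \<noteq> {}"
      then obtain r where r: "r \<in> S c" "r \<in> S c'" by auto
      have "r = 0" using oa_uniq[OF oa, of 0 c c' r 0] r c rng g3 unfolding S_def a0_def by auto
      then show False using r unfolding S_def by auto
    qed
  qed
  have "(\<Sum>c\<in>{1..n+1}. card (S c)) = card (\<Union>c\<in>{1..n+1}. S c)"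
    by (rule card_UN_disjoint[symmetric]) (use disj in \<open>auto simp: S_def\<close>)
  also have "\<dots> \<le> card (R - {0})"
    by (rule card_mono) (auto simp: S_def R_def finR)
  finally have "(\<Sum>c\<in>{1..n+1}. card (S c)) \<le> g * g - 1" using cR0 by simp
  moreover have "(\<Sum>c\<in>{1..n+1}. g - 1) \<le> (\<Sum>c\<in>{1..n+1}. card (S c))"
    by (rule sum_mono) (use cS in auto)
  ultimately have "(n+1) * (g - 1) \<le> g * g - 1" by simp
  moreover have "g * g - 1 = (g+1) * (g - 1)" using g2 by (cases g) auto
  ultimately have "(n+1) * (g-1) \<le> (g+1) * (g-1)" by simp
  then have "0 < g - 1 \<longrightarrow> n + 1 \<le> g + 1" by (simp only: mult_le_cancel2)
  then show ?thesis using g2 by simp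
qed


lemma madd: "((a::nat) + x) mod n = (a + y) mod n \<longleftrightarrow> x mod n = y mod n"
  using cong_add_lcancel_nat[of a x y n] unfolding cong_def .

lemma mod_ne_lt:
  assumes "(a::nat) < g" "b < g" "a \<noteq> b"
  shows "(a + s) mod g \<noteq> (b + s) mod g"
  using assms by (simp add: add.commute[of _ s] madd)

definition wd :: "(nat \<Rightarrow> nat \<Rightarrow> nat) \<Rightarrow> nat \<Rightarrow> nat \<Rightarrow> nat \<Rightarrow> nat set \<Rightarrow> nat list" where
  "wd A g n r T = map (\<lambda>i. if i \<in> T then Suc ((A r i + \<Sum>T) mod g) else 0) [0..<n]"

definition trip :: "nat \<Rightarrow> nat set set" where
  "trip n = {T. T \<subseteq> {..<n} \<and> card T = 3}"

definition code :: "(nat \<Rightarrow> nat \<Rightarrow> nat) \<Rightarrow> nat \<Rightarrow> nat \<Rightarrow> nat \<Rightarrow> nat list set" where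
  "code A g n r = wd A g n r ` trip n"

definition supp :: "nat list \<Rightarrow> nat set" where
  "supp x = {i. i < length x \<and> x ! i \<noteq> 0}"

lemma wd_len[simp]: "length (wd A g n r T) = n"
  by (simp add: wd_def)

lemma wd_nth: "i < n \<Longrightarrow> wd A g n r T ! i = (if i \<in> T then Suc ((A r i + \<Sum>T) mod g) else 0)"
  by (simp add: wd_def)

lemma wd_supp: "T \<subseteq> {..<n} \<Longrightarrow> supp (wd A g n r T) = T"
  unfolding supp_def by (auto simp: wd_nth split: if_splits)

lemma weight_supp: "weight x = card (supp x)"
  by (simp add: weight_def supp_def)

lemma trip_fin: "finite (trip n)"
  unfolding trip_def by (rule finite_subset[of _ "Pow {..<n}"]) auto

lemma trip_card: "card (trip n) = n choose 3"
  unfolding trip_def using n_subsets[of "{..<n}" 3] by simp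

lemma wd_Hq:
  assumes "T \<in> trip n" "g > 0"
  shows "wd A g n r T \<in> Hq (g+1) n 3"
proof -
  have "set (wd A g n r T) \<subseteq> {..<g+1}"
    using assms(2) by (auto simp: wd_def)
  moreover have "weight (wd A g n r T) = 3"
    using assms(1) unfolding weight_supp trip_def by (simp add: wd_supp)
  ultimately show ?thesis unfolding Hq_def by simp
qed

lemma trip_small:
  assumes "T \<in> trip n" "T' \<in> trip n" "T \<noteq> T'"
  shows "4 \<le> n"
proof (rule ccontr)
  assume "\<not> 4 \<le> n"
  hence "card {..<n} \<le> 3" by simp
  have "T = {..<n}" using assms(1) \<open>card {..<n} \<le> 3\<close> unfolding trip_def
    by (intro card_seteq) auto
  moreover have "T' = {..<n}" using assms(2) \<open>card {..<n} \<le> 3\<close> unfolding trip_def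
    by (intro card_seteq) auto
  ultimately show False using assms(3) by simp
qed

lemma sum_mod_ne:
  assumes T: "T \<in> trip n" and T': "T' \<in> trip n" and I: "card (T \<inter> T') = 2" and ng: "n \<le> g"
  shows "\<Sum>T mod g \<noteq> \<Sum>T' mod g"
proof -
  have fT: "finite T" "finite T'" using T T' unfolding trip_def by (auto intro: finite_subset)
  have "card (T - T') = 1" using card_Diff_subset_Int[of T T'] fT I T unfolding trip_def
    by (simp add: Diff_Int_distrib card_Diff_subset_Int)
  then obtain k where k: "T - T' = {k}" by (auto simp: card_Suc_eq)
  have "card (T' - T) = 1" using card_Diff_subset_Int[of T' T] fT I T' unfolding trip_def
    by (simp add: Int_commute)
  then obtain k' where k': "T' - T = {k'}" by (auto simp: card_Suc_eq)
  have eT: "T = insert k (T \<inter> T')" using k by blast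
  have eT': "T' = insert k' (T \<inter> T')" using k' by blast
  have s1: "\<Sum>T = k + \<Sum>(T \<inter> T')"
    by (subst eT, rule sum.insert) (use fT k in auto)
  have s2: "\<Sum>T' = k' + \<Sum>(T \<inter> T')"
    by (subst eT', rule sum.insert) (use fT k' in auto)
  have "k < n" "k' < n" "k \<noteq> k'" using k k' T T' unfolding trip_def by auto
  then show ?thesis unfolding s1 s2 using ng by (intro mod_ne_lt) auto
qed

lemma wd_dist:
  assumes T: "T \<in> trip n" and T': "T' \<in> trip n" and ne: "T \<noteq> T'"
    and ng: "4 \<le> n \<Longrightarrow> n \<le> g"
  shows "4 \<le> hamming_dist (wd A g n r T) (wd A g n r T')"
proof -
  have ng: "n \<le> g" using ng trip_small[OF T T' ne] by simp
  have fT: "finite T" "finite T'" using T T' unfolding trip_def by (auto intro: finite_subset)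
  define D where "D = {i. i < n \<and> wd A g n r T ! i \<noteq> wd A g n r T' ! i}"
  have hd: "hamming_dist (wd A g n r T) (wd A g n r T') = card D"
    unfolding hamming_dist_def D_def by simp
  have fD: "finite D" unfolding D_def by simp
  have D1: "T - T' \<subseteq> D" "T' - T \<subseteq> D" using T T' unfolding D_def trip_def
    by (auto simp: wd_nth)
  have cI: "card (T \<inter> T') \<le> 2"
  proof (rule ccontr)
    assume "\<not> ?thesis"
    hence "card (T \<inter> T') \<ge> card T" using T unfolding trip_def by simp
    hence "T \<inter> T' = T" using fT by (intro card_seteq) auto
    hence "T \<subseteq> T'" by blast
    hence "T = T'" using fT T T' unfolding trip_def by (intro card_subset_eq) auto
    thus False using ne by simp
  qed
  have cT: "card T = 3" "card T' = 3" using T T' unfolding trip_def by auto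
  show ?thesis
  proof (cases "card (T \<inter> T') = 2")
    case True
    have "\<Sum>T mod g \<noteq> \<Sum>T' mod g" by (rule sum_mod_ne[OF T T' True ng])
    hence "T \<inter> T' \<subseteq> D" using T T' unfolding D_def trip_def
      by (auto simp: wd_nth madd)
    hence "T \<union> T' \<subseteq> D" using D1 by blast
    hence "card (T \<union> T') \<le> card D" using fD by (rule card_mono[rotated])
    moreover have "card (T \<union> T') = 4"
      using card_Un_Int[OF fT] True cT by simp
    ultimately show ?thesis using hd by simp
  next
    case False
    hence c1: "card (T \<inter> T') \<le> 1" using cI by simp
    have "card (T - T') \<ge> 2" using card_Diff_subset_Int[of T T'] fT c1 cT by simp
    moreover have "card (T' - T) \<ge> 2" using card_Diff_subset_Int[of T' T] fT c1 cT
      by (simp add: Int_commute)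
    moreover have "card ((T - T') \<union> (T' - T)) = card (T - T') + card (T' - T)"
      by (rule card_Un_disjoint) (use fT in auto)
    moreover have "card ((T - T') \<union> (T' - T)) \<le> card D"
      using D1 fD by (intro card_mono) auto
    ultimately show ?thesis using hd by simp
  qed
qed


lemma code_card_le:
  assumes C: "is_code q n 4 3 C"
  shows "card C \<le> n choose 3"
proof -
  have HC: "\<And>x. x \<in> C \<Longrightarrow> length x = n \<and> weight x = 3"
    using C unfolding is_code_def Hq_def by auto
  have "inj_on supp C"
  proof (rule inj_onI, rule ccontr)
    fix x y assume xy: "x \<in> C" "y \<in> C" "supp x = supp y" "x \<noteq> y"
    hence d4: "4 \<le> hamming_dist x y" using C unfolding is_code_def by blast
    have "{i. i < length x \<and> x ! i \<noteq> y ! i} \<subseteq> supp x"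
      using xy HC unfolding supp_def by (auto simp: set_eq_iff)
    hence "hamming_dist x y \<le> card (supp x)"
      unfolding hamming_dist_def by (intro card_mono) (auto simp: supp_def)
    also have "\<dots> = 3" using HC xy by (simp add: weight_supp)
    finally show False using d4 by simp
  qed
  moreover have "supp ` C \<subseteq> trip n"
    using HC unfolding trip_def supp_def by (auto simp: weight_supp supp_def)
  ultimately have "card C \<le> card (trip n)"
    using trip_fin by (intro card_inj_on_le)
  thus ?thesis by (simp add: trip_card)
qed

lemma Aq_eq:
  assumes "is_code q n 4 3 C0" "card C0 = n choose 3"
  shows "Aq q n 4 3 = n choose 3"
  unfolding Aq_def
proof (rule Max_eqI)
  show "finite (card ` {C. is_code q n 4 3 C})"
    by (rule finite_subset[of _ "{..n choose 3}"]) (auto dest: code_card_le)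
  show "\<And>y. y \<in> card ` {C. is_code q n 4 3 C} \<Longrightarrow> y \<le> n choose 3"
    by (auto dest: code_card_le)
  show "n choose 3 \<in> card ` {C. is_code q n 4 3 C}"
    using assms by (metis (mono_tags, lifting) image_eqI mem_Collect_eq)
qed

lemma arith_fix:
  assumes "(v::nat) < g"
  shows "((v + (g - 1) * S) mod g + S) mod g = v"
proof -
  have "((v + (g - 1) * S) mod g + S) mod g = (v + (g - 1) * S + S) mod g"
    by (simp add: mod_add_left_eq)
  also have "v + (g - 1) * S + S = v + g * S" using assms
    by (cases g) auto
  finally show ?thesis using assms by simp
qed

lemma cover:
  assumes rng: "\<forall>r<g^3. \<forall>c<n+2. A r c < g" and oa: "oap A (n+2) g" and g0: "g > 0"
    and x: "x \<in> Hq (g+1) n 3"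
  shows "\<exists>r<g^3. \<exists>T\<in>trip n. x = wd A g n r T"
proof -
  have lx: "length x = n" and sx: "set x \<subseteq> {..<g+1}" and wx: "weight x = 3"
    using x unfolding Hq_def by auto
  define T where "T = supp x"
  have Tt: "T \<in> trip n" using lx wx unfolding T_def trip_def by (auto simp: weight_supp supp_def)
  then obtain a b c where abc: "T = {a,b,c}" "a \<noteq> b" "b \<noteq> c" "a \<noteq> c"
    unfolding trip_def by (auto simp: card_3_iff)
  have abcn: "a < n" "b < n" "c < n" using Tt abc unfolding trip_def by auto
  define w where "w i = ((x ! i - 1) + (g - 1) * \<Sum>T) mod g" for i
  have "w a < g" "w b < g" "w c < g" using g0 unfolding w_def by auto
  then have "\<exists>r<g^3. A r a = w a \<and> A r b = w b \<and> A r c = w c"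
    using oa_ex[OF oa, of a b c "w a" "w b" "w c"] abc abcn by auto
  then obtain r where r: "r < g^3" "A r a = w a" "A r b = w b" "A r c = w c"
    by blast
  have "x = wd A g n r T"
  proof (rule nth_equalityI)
    show "length x = length (wd A g n r T)" using lx by simp
    fix i assume i: "i < length x"
    show "x ! i = wd A g n r T ! i"
    proof (cases "i \<in> T")
      case True
      have Ari: "A r i = w i" using True r abc by auto
      have xi: "x ! i < g + 1" "x ! i \<noteq> 0" using sx i True unfolding T_def supp_def
        by (auto dest: nth_mem)
      hence "x ! i - 1 < g" by simp
      hence "(A r i + \<Sum>T) mod g = x ! i - 1" unfolding Ari w_def by (rule arith_fix)
      then show ?thesis using True i lx xi by (simp add: wd_nth)
    next
      case False
      then show ?thesis using i lx unfolding T_def supp_def by (simp add: wd_nth)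
    qed
  qed
  then show ?thesis using r Tt by blast
qed

lemma wd_inj:
  assumes rng: "\<forall>r<g^3. \<forall>c<n+2. A r c < g" and oa: "oap A (n+2) g"
    and r: "r < g^3" "r' < g^3" and T: "T \<in> trip n" "T' \<in> trip n"
    and eq: "wd A g n r T = wd A g n r' T'"
  shows "r = r'"
proof -
  have "T = T'" using eq T wd_supp[of T n A g r] wd_supp[of T' n A g r'] unfolding trip_def by auto
  obtain a b c where abc: "T = {a,b,c}" "a \<noteq> b" "b \<noteq> c" "a \<noteq> c"
    using T unfolding trip_def by (auto simp: card_3_iff)
  have abcn: "a < n" "b < n" "c < n" using T abc unfolding trip_def by auto
  have ag: "A r i = A r' i" if i: "i \<in> T" "i < n" for i
  proof -
    have "wd A g n r T ! i = wd A g n r' T ! i" using eq \<open>T = T'\<close> by simp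
    hence "(A r i + \<Sum>T) mod g = (A r' i + \<Sum>T) mod g" using i by (simp add: wd_nth)
    hence "A r i mod g = A r' i mod g" by (simp add: add.commute[of _ "\<Sum>T"] madd)
    moreover have "A r i < g" "A r' i < g" using rng r i by auto
    ultimately show ?thesis by simp
  qed
  show ?thesis
    by (rule oa_uniq[OF oa, of a b c]) (use abc abcn rng r ag in auto)
qed


theorem theorem4p8:
  fixes n g :: nat
  assumes "n \<ge> 3" and "g > 0" and "g \<ge> m_param n"
    and "OA 3 (n + 2) g"
  shows "\<exists>P. TOC (g + 1) n 4 3 P"
proof -
  obtain A where rng: "\<forall>r<g^3. \<forall>c<n+2. A r c < g" and oa: "oap A (n+2) g"
    using assms(4) unfolding OA_def oap_def by blast
  have ng: "n \<le> g" if n4: "4 \<le> n"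
  proof (cases "g = 1")
    case True
    with assms(3) have "m_param n \<le> 1" by simp
    with n4 show ?thesis unfolding m_param_def by (simp split: if_splits)
  next
    case False then have "g \<ge> 2" using assms(2) by simp
    then show ?thesis using bush[OF rng oa] n4 by simp
  qed
  have codeopt: "optimal_code (g+1) n 4 3 (code A g n r)" for r
  proof -
    have "{0,1,2} \<in> trip n" using assms(1) unfolding trip_def by auto
    hence ne: "code A g n r \<noteq> {}" unfolding code_def by blast
    have sub: "code A g n r \<subseteq> Hq (g+1) n 3"
      unfolding code_def using wd_Hq assms(2) by blast
    have dist: "\<forall>x\<in>code A g n r. \<forall>y\<in>code A g n r. x \<noteq> y \<longrightarrow> 4 \<le> hamming_dist x y"
    proof (intro ballI impI)
      fix x y assume "x \<in> code A g n r" "y \<in> code A g n r" "x \<noteq> y"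
      then obtain T T' where "T \<in> trip n" "T' \<in> trip n" "x = wd A g n r T" "y = wd A g n r T'"
        unfolding code_def by blast
      moreover have "T \<noteq> T'" using calculation \<open>x \<noteq> y\<close> by blast
      ultimately show "4 \<le> hamming_dist x y" using wd_dist ng by blast
    qed
    have isc: "is_code (g+1) n 4 3 (code A g n r)"
      unfolding is_code_def using ne sub dist by blast
    have "inj_on (wd A g n r) (trip n)"
      by (rule inj_onI) (metis wd_supp trip_def mem_Collect_eq)
    hence "card (code A g n r) = n choose 3"
      unfolding code_def by (simp add: card_image trip_card)
    then show ?thesis unfolding optimal_code_def using isc Aq_eq by simp
  qed
  define P where "P = code A g n ` {..<g^3}"
  have "TOC (g + 1) n 4 3 P"
    unfolding TOC_def
  proof (intro conjI)
    show "\<Union>P = Hq (g + 1) n 3"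
    proof
      show "\<Union>P \<subseteq> Hq (g + 1) n 3" unfolding P_def code_def using wd_Hq assms(2) by blast
      show "Hq (g + 1) n 3 \<subseteq> \<Union>P"
      proof
        fix x assume "x \<in> Hq (g + 1) n 3"
        then obtain r T where "r < g^3" "T \<in> trip n" "x = wd A g n r T"
          using cover[OF rng oa assms(2)] by blast
        then show "x \<in> \<Union>P" unfolding P_def code_def by blast
      qed
    qed
    show "\<forall>C\<in>P. optimal_code (g + 1) n 4 3 C" unfolding P_def using codeopt by blast
    show "\<forall>C\<in>P. \<forall>D\<in>P. C \<noteq> D \<longrightarrow> C \<inter> D = {}"
    proof (intro ballI impI)
      fix C D assume "C \<in> P" "D \<in> P" "C \<noteq> D"
      then obtain r r' where r: "r < g^3" "r' < g^3" "C = code A g n r" "D = code A g n r'"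
        unfolding P_def by blast
      show "C \<inter> D = {}"
      proof (rule ccontr)
        assume "C \<inter> D \<noteq> {}"
        then obtain T T' where "T \<in> trip n" "T' \<in> trip n" "wd A g n r T = wd A g n r' T'"
          using r unfolding code_def by blast
        hence "r = r'" using wd_inj[OF rng oa] r by blast
        thus False using r \<open>C \<noteq> D\<close> by simp
      qed
    qed
  qed
  then show ?thesis by blast
qed

end
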